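(* Let $r \ge 3$. There exist constants $\rho,\kappa>0$, $C,c>0$ and $t_0$, all depending only on $r$, such that the following holds for every integer $t\ge t_0$ and every integer $m$ with $\binom{t-1}{r} \le m \le \binom{t}{r}$. Let $G \subseteq \mathbb{N}^{(r)}$ and let $w$ be a weighting of $\mathbb{N}$ such that $|G| \le m$, $w(G) = \lambda(G) = \Lambda(m,r)$, and $w(x) > 0$ for every $x \in V(G)$. Then: (i) $w(x) \le C/t$ for every $x \in V(G)$; (ii) $|N(x)| \ge \rho t^{r-1}$ for every $x \in V(G)$; (iii) $|V(G)| \le \kappa t$; (iv) at least $ct$ vertices of $G$ have weight at least $c/t$.
   Context: An $r$-graph is a finite subset $G$ of $\mathbb{N}^{(r)}$ (the $r$-subsets of $\mathbb{N}$); $V(G)$ is the set of elements lying in some edge. A weighting of $\mathbb{N}$ is $w:\mathbb{N}\to[0,\infty)$ with $\sum_x w(x)=1$; $w(G)=\sum_{e\in G}\prod_{x\in e}w(x)$; the Lagrangian is $\lambda(G)=\max_w w(G)$. $\Lambda(m,r)=\max\{\lambda(G): G\subseteq\mathbb{N}^{(r)},\ |G|=m\}$. For $x\in V(G)$, $N(x)=\{e\setminus\{x\}: e\in G,\ x\in e\}$. *)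

theory Defs
  imports Complex_Main
begin

definition rgraph :: "nat \<Rightarrow> nat set set \<Rightarrow> bool" where
  "rgraph r G \<longleftrightarrow> finite G \<and> (\<forall>e\<in>G. finite e \<and> card e = r)"

definition vset :: "nat set set \<Rightarrow> nat set" where
  "vset G = \<Union>G"

definition nbhd :: "nat set set \<Rightarrow> nat \<Rightarrow> nat set set" where
  "nbhd G x = {e - {x} | e. e \<in> G \<and> x \<in> e}"

definition weighting :: "(nat \<Rightarrow> real) \<Rightarrow> bool" where
  "weighting w \<longleftrightarrow> (\<forall>x. 0 \<le> w x) \<and> w sums 1"

definition wval :: "(nat \<Rightarrow> real) \<Rightarrow> nat set set \<Rightarrow> real" where
  "wval w G = (\<Sum>e\<in>G. \<Prod>x\<in>e. w x)"

text \<open>Lagrangian: maximum of w(G) over weightings (the supremum, attained).\<close>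
definition lagr :: "nat set set \<Rightarrow> real" where
  "lagr G = Sup {wval w G | w. weighting w}"

definition Lam :: "nat \<Rightarrow> nat \<Rightarrow> real" where
  "Lam m r = Sup {lagr G | G. rgraph r G \<and> card G = m}"

end

theory Submission
  imports Defs
begin

lemma sum_edges_swap:
  assumes "finite G" "finite V" "\<forall>e\<in>G. e \<subseteq> V"
  shows "(\<Sum>e\<in>G. \<Sum>y\<in>e. h y e) = (\<Sum>y\<in>V. \<Sum>e\<in>{e\<in>G. y\<in>e}. h y e)"
proof -
  have "(\<Sum>e\<in>G. \<Sum>y\<in>e. h y e) = (\<Sum>e\<in>G. \<Sum>y\<in>{y\<in>V. y\<in>e}. h y e)"
  proof (rule sum.cong[OF refl])
    fix e assume "e \<in> G"
    then have "{y\<in>V. y\<in>e} = e" using assms by blast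
    then show "(\<Sum>y\<in>e. h y e) = (\<Sum>y\<in>{y\<in>V. y\<in>e}. h y e)" by simp
  qed
  also have "\<dots> = (\<Sum>y\<in>V. \<Sum>e\<in>{e\<in>G. y\<in>e}. h y e)"
    by (rule sum.swap_restrict) (use assms in auto)
  finally show ?thesis .
qed

lemma esym_bound:
  fixes w :: "nat \<Rightarrow> real"
  assumes "finite V" "\<forall>y\<in>V. 0 \<le> w y"
  shows "finite F \<Longrightarrow> \<forall>f\<in>F. f \<subseteq> V \<and> card f = s \<Longrightarrow>
     fact s * (\<Sum>f\<in>F. \<Prod>y\<in>f. w y) \<le> (\<Sum>y\<in>V. w y) ^ s"
proof (induction s arbitrary: F)
  case 0
  have fin: "\<And>f. f \<in> F \<Longrightarrow> finite f" using 0 assms(1) finite_subset by blast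
  have "F \<subseteq> {{}}" using 0 fin by auto
  then have "card F \<le> card {{}::nat set}" by (intro card_mono) auto
  then have "card F \<le> 1" by simp
  moreover have "(\<Sum>f\<in>F. \<Prod>y\<in>f. w y) = (\<Sum>f\<in>F. 1)"
    using \<open>F \<subseteq> {{}}\<close> by (intro sum.cong) auto
  ultimately show ?case by simp
next
  case (Suc s)
  have fin: "\<And>f. f \<in> F \<Longrightarrow> finite f" using Suc.prems assms(1) finite_subset by blast
  define Fy where "Fy y = (\<lambda>f. f - {y}) ` {f\<in>F. y\<in>f}" for y
  have inj: "inj_on (\<lambda>f. f - {y}) {f\<in>F. y\<in>f}" for y
    by (rule inj_onI) (metis (no_types, lifting) insert_Diff mem_Collect_eq)
  have IH: "fact s * (\<Sum>g\<in>Fy y. \<Prod>z\<in>g. w z) \<le> (\<Sum>y\<in>V. w y) ^ s" for y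
  proof (rule Suc.IH)
    show "finite (Fy y)" unfolding Fy_def using Suc.prems by auto
    show "\<forall>f\<in>Fy y. f \<subseteq> V \<and> card f = s" unfolding Fy_def using Suc.prems fin by auto
  qed
  have eq1: "(Suc s) * (\<Prod>y\<in>f. w y) = (\<Sum>y\<in>f. w y * (\<Prod>z\<in>f-{y}. w z))" if "f \<in> F" for f
  proof -
    have "(\<Sum>y\<in>f. w y * (\<Prod>z\<in>f-{y}. w z)) = (\<Sum>y\<in>f. (\<Prod>z\<in>f. w z))"
      by (rule sum.cong) (auto simp: fin that prod.remove)
    then show ?thesis using Suc.prems that by simp
  qed
  have "fact (Suc s) * (\<Sum>f\<in>F. \<Prod>y\<in>f. w y) = fact s * (\<Sum>f\<in>F. (Suc s) * (\<Prod>y\<in>f. w y))"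
    by (simp add: sum_distrib_left sum.distrib algebra_simps)
  also have "\<dots> = fact s * (\<Sum>f\<in>F. \<Sum>y\<in>f. w y * (\<Prod>z\<in>f-{y}. w z))"
    using eq1 by simp
  also have "\<dots> = fact s * (\<Sum>y\<in>V. \<Sum>f\<in>{f\<in>F. y\<in>f}. w y * (\<Prod>z\<in>f-{y}. w z))"
    using sum_edges_swap[of F V "\<lambda>y f. w y * (\<Prod>z\<in>f-{y}. w z)"] Suc.prems assms by simp
  also have "\<dots> = (\<Sum>y\<in>V. w y * (fact s * (\<Sum>g\<in>Fy y. \<Prod>z\<in>g. w z)))"
    unfolding Fy_def by (simp add: sum.reindex[OF inj] sum_distrib_left algebra_simps)
  also have "\<dots> \<le> (\<Sum>y\<in>V. w y * (\<Sum>y\<in>V. w y) ^ s)"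
    by (rule sum_mono) (use IH assms in \<open>auto intro: mult_left_mono\<close>)
  also have "\<dots> = (\<Sum>y\<in>V. w y) ^ Suc s" by (simp add: sum_distrib_right)
  finally show ?case .
qed

lemma bern2:
  fixes e :: real
  assumes "0 \<le> e" "e \<le> 1"
  shows "(1 - e) ^ r \<le> 1 - real r * e + (real r)^2 * e^2"
proof (induction r)
  case 0 then show ?case by simp
next
  case (Suc r)
  have "(1 - e) ^ Suc r = (1 - e) * (1 - e) ^ r" by simp
  also have "\<dots> \<le> (1 - e) * (1 - real r * e + (real r)^2 * e^2)"
    using Suc assms by (intro mult_left_mono) auto
  also have "\<dots> \<le> 1 - real (Suc r) * e + (real (Suc r))^2 * e^2"
  proof -
    have "0 \<le> (real r)^2 * e^3" using assms by simp
    moreover have "0 \<le> (real r + 1) * e^2" using assms by simp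
    ultimately show ?thesis by (simp add: algebra_simps power2_eq_square power3_eq_cube)
  qed
  finally show ?case .
qed

lemma w_nonneg: "weighting w \<Longrightarrow> 0 \<le> w y" unfolding weighting_def by auto

lemma wsum_le1: assumes "weighting w" "finite I" shows "sum w I \<le> 1"
proof -
  have s: "w sums 1" using assms unfolding weighting_def by auto
  have "sum w I \<le> suminf w"
    by (rule sum_le_suminf) (use s assms w_nonneg in \<open>auto simp: sums_iff\<close>)
  then show ?thesis using s sums_unique by fastforce
qed

lemma w_le1: "weighting w \<Longrightarrow> w y \<le> 1"
  using wsum_le1[of w "{y}"] by simp

lemma wval_bounds: assumes "weighting w" "rgraph r G"
  shows "0 \<le> wval w G" "wval w G \<le> card G"
proof -
  show "0 \<le> wval w G" unfolding wval_def using w_nonneg[OF assms(1)]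
    by (intro sum_nonneg prod_nonneg) auto
  have "wval w G \<le> (\<Sum>e\<in>G. 1)" unfolding wval_def
    by (intro sum_mono prod_le_1) (use w_nonneg[OF assms(1)] w_le1[OF assms(1)] in auto)
  then show "wval w G \<le> card G" by simp
qed

lemma weighting_delta: "weighting (\<lambda>y. if y = 0 then 1 else 0)"
  unfolding weighting_def using sums_single[of 0 "\<lambda>_. 1::real"] by auto

lemma lagr_ge: assumes "weighting w" "rgraph r G" shows "wval w G \<le> lagr G"
  unfolding lagr_def
  by (rule cSup_upper) (use wval_bounds[OF _ assms(2)] assms(1) in \<open>auto simp: bdd_above_def\<close>)

lemma lagr_le: assumes "rgraph r G" shows "lagr G \<le> card G" "0 \<le> lagr G"
proof -
  show "lagr G \<le> card G" unfolding lagr_def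
    by (rule cSup_least) (use wval_bounds[OF _ assms] weighting_delta in auto)
  show "0 \<le> lagr G"
    using lagr_ge[OF weighting_delta assms] wval_bounds(1)[OF weighting_delta assms] by linarith
qed

definition dg :: "(nat \<Rightarrow> real) \<Rightarrow> nat set set \<Rightarrow> nat \<Rightarrow> real" where
  "dg w G x = (\<Sum>e\<in>{e\<in>G. x\<in>e}. \<Prod>y\<in>e-{x}. w y)"

lemma dg_nonneg: "weighting w \<Longrightarrow> 0 \<le> dg w G x"
  unfolding dg_def using w_nonneg by (intro sum_nonneg prod_nonneg) auto

lemma perturb:
  assumes w: "weighting w" and G: "rgraph r G" and ex: "w x > 0"
    and e: "0 < e" "e < 1" "e \<le> w x"
  shows "wval w G - e * dg w G x \<le> lagr G * (1 - e) ^ r"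
proof -
  define g where "g y = w y - (if y = x then e else 0)" for y
  define w' where "w' y = g y / (1 - e)" for y
  have "w sums 1" using w unfolding weighting_def by auto
  then have "g sums (1 - e)" unfolding g_def
    by (intro sums_diff) (use sums_single[of x "\<lambda>_. e"] in auto)
  then have "w' sums ((1 - e) / (1 - e))" unfolding w'_def by (rule sums_divide)
  then have "w' sums 1" using e by simp
  moreover have "0 \<le> w' y" for y unfolding w'_def g_def using e w_nonneg[OF w, of y] by auto
  ultimately have ww: "weighting w'" unfolding weighting_def by auto
  have fin: "finite G" "\<And>f. f \<in> G \<Longrightarrow> finite f \<and> card f = r" using G unfolding rgraph_def by auto
  have pe: "(\<Prod>y\<in>f. g y) = (\<Prod>y\<in>f. w y) - (if x \<in> f then e * (\<Prod>y\<in>f-{x}. w y) else 0)"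
    if "f \<in> G" for f
  proof (cases "x \<in> f")
    case True
    have "(\<Prod>y\<in>f-{x}. g y) = (\<Prod>y\<in>f-{x}. w y)" by (rule prod.cong) (auto simp: g_def)
    then show ?thesis using True fin(2)[OF that]
      by (simp add: prod.remove[of f x] g_def algebra_simps)
  next
    case False
    have "(\<Prod>y\<in>f. g y) = (\<Prod>y\<in>f. w y)" by (rule prod.cong) (use False in \<open>auto simp: g_def\<close>)
    then show ?thesis using False by simp
  qed
  have "wval w' G = (\<Sum>f\<in>G. (\<Prod>y\<in>f. g y) / (1 - e) ^ r)"
    unfolding wval_def w'_def
    by (rule sum.cong) (use fin in \<open>auto simp: prod_dividef\<close>)
  also have "\<dots> = (\<Sum>f\<in>G. (\<Prod>y\<in>f. g y)) / (1 - e) ^ r" by (simp add: sum_divide_distrib)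
  also have "(\<Sum>f\<in>G. (\<Prod>y\<in>f. g y)) = wval w G - e * dg w G x"
  proof -
    have "(\<Sum>f\<in>G. (\<Prod>y\<in>f. g y)) = (\<Sum>f\<in>G. (\<Prod>y\<in>f. w y) - (if x \<in> f then e * (\<Prod>y\<in>f-{x}. w y) else 0))"
      by (rule sum.cong) (auto simp: pe)
    also have "\<dots> = wval w G - (\<Sum>f\<in>G. (if x \<in> f then e * (\<Prod>y\<in>f-{x}. w y) else 0))"
      unfolding wval_def by (rule sum_subtractf)
    also have "(\<Sum>f\<in>G. (if x \<in> f then e * (\<Prod>y\<in>f-{x}. w y) else 0)) = e * dg w G x"
      unfolding dg_def sum_distrib_left sum.inter_filter[OF fin(1)] by (rule sum.cong) auto
    finally show ?thesis .
  qed
  finally have "wval w' G = (wval w G - e * dg w G x) / (1 - e) ^ r" .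
  moreover have "wval w' G \<le> lagr G" by (rule lagr_ge[OF ww G])
  ultimately show ?thesis using e by (simp add: divide_le_eq)
qed

lemma kkt:
  assumes w: "weighting w" and G: "rgraph r G" and opt: "wval w G = lagr G" and ex: "w x > 0"
  shows "real r * lagr G \<le> dg w G x"
proof (rule ccontr)
  define L where "L = lagr G"
  define D where "D = dg w G x"
  assume "\<not> real r * lagr G \<le> dg w G x"
  then have lt: "D < r * L" unfolding L_def D_def by simp
  have D0: "0 \<le> D" unfolding D_def by (rule dg_nonneg[OF w])
  have "L \<noteq> 0" using lt D0 by auto
  then have L0: "0 < L" using lagr_le(2)[OF G] unfolding L_def by simp
  have "r \<noteq> 0" proof assume "r = 0" then show False using lt D0 by simp qed
  then have r0: "0 < real r" by simp
  define e where "e = min (w x / 2) ((r * L - D) / (2 * L * (real r)^2))"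
  have wx1: "w x \<le> 1" by (rule w_le1[OF w])
  have e0: "0 < e" unfolding e_def using ex lt L0 r0 by auto
  have e1: "e < 1" "e \<le> w x" unfolding e_def using wx1 ex by auto
  have "L - e * D \<le> L * (1 - e) ^ r"
    using perturb[OF w G ex e0 e1(1) e1(2)] opt unfolding L_def D_def by simp
  also have "\<dots> \<le> L * (1 - real r * e + (real r)^2 * e^2)"
    using bern2[of e r] e0 e1 L0 by (intro mult_left_mono) auto
  finally have "e * (r * L - D) \<le> e * (L * (real r)^2 * e)" by (simp add: algebra_simps power2_eq_square)
  then have "r * L - D \<le> L * (real r)^2 * e" using e0 by simp
  also have "\<dots> \<le> L * (real r)^2 * ((r * L - D) / (2 * L * (real r)^2))"
    using L0 r0 unfolding e_def by (intro mult_left_mono) auto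
  also have "\<dots> = (r * L - D) / 2" using L0 r0 by (simp add: field_simps)
  finally show False using lt by (simp add: mult.commute)
qed

lemma ring_distribs_idf: "(1 - a) * (1 - b) = 1 - (a + b) + a * (b::real)"
  by (simp add: algebra_simps)

lemma choose_step: "Suc k * (n choose Suc k) = (n - k) * (n choose k)"
  by (metis binomial_absorption binomial_absorb_comp)

lemma ratio_bound:
  fixes n :: nat assumes "0 < n"
  shows "r \<le> n \<Longrightarrow> real n ^ r * (1 - (real r)^2 / n) \<le> fact r * real (n choose r)"
proof (induction r)
  case 0 then show ?case by simp
next
  case (Suc r)
  have IH: "real n ^ r * (1 - (real r)^2 / n) \<le> fact r * real (n choose r)" using Suc by simp
  have nr: "real (n - r) = real n - real r" using Suc.prems by simp
  have pos: "0 \<le> real n - real r" using Suc.prems by simp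
  have "fact (Suc r) * real (n choose Suc r) = fact r * real (Suc r * (n choose Suc r))"
    by (simp add: algebra_simps)
  also have "\<dots> = fact r * real (n choose r) * (real n - real r)"
    unfolding choose_step using nr by (simp add: algebra_simps)
  finally have eq: "fact (Suc r) * real (n choose Suc r) = fact r * real (n choose r) * (real n - real r)" .
  have "real n ^ Suc r * (1 - (real (Suc r))^2 / n) \<le> real n ^ r * (1 - (real r)^2 / n) * (real n - real r)"
  proof -
    have A: "real n ^ r * (1 - (real r)^2 / n) * (real n - real r)
       = real n ^ Suc r * ((1 - (real r)^2 / n) * (1 - real r / n))"
      using assms by (simp add: field_simps)
    have "(1 - (real (Suc r))^2 / n) \<le> (1 - (real r)^2 / n) * (1 - real r / n)"
    proof -
      have "0 \<le> ((real r)^2 / n) * (real r / n)" using assms by simp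
      moreover have "(real r)^2 / n + real r / n \<le> (real (Suc r))^2 / n"
        using assms by (simp add: divide_simps power2_eq_square algebra_simps)
      moreover have "(1 - (real r)^2 / n) * (1 - real r / n) = 1 - ((real r)^2 / n + real r / n) + ((real r)^2 / n) * (real r / n)"
        using ring_distribs_idf[of "(real r)^2 / n" "real r / n"] by simp
      ultimately show ?thesis by linarith
    qed
    then show ?thesis unfolding A by (intro mult_left_mono) auto
  qed
  also have "\<dots> \<le> fact r * real (n choose r) * (real n - real r)"
    using IH pos by (intro mult_right_mono) auto
  also have "\<dots> = fact (Suc r) * real (n choose Suc r)" by (rule eq[symmetric])
  finally show ?case .
qed

lemma lam_lower:
  fixes n m r :: nat
  assumes n0: "0 < n" and m1: "n choose r \<le> m" and m2: "m \<le> Suc n choose r"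
  shows "real (n choose r) / real n ^ r \<le> Lam m r"
proof -
  define K where "K = {e. e \<subseteq> {0..<n} \<and> card e = r}"
  define E where "E = {e. e \<subseteq> {0..<Suc n} \<and> card e = r}"
  have KE: "K \<subseteq> E" unfolding K_def E_def by auto
  have cK: "card K = n choose r" unfolding K_def by (subst n_subsets) auto
  have cE: "card E = Suc n choose r" unfolding E_def by (subst n_subsets) auto
  have fE: "finite E" unfolding E_def by (rule finite_subset[of _ "Pow {0..<Suc n}"]) auto
  have fK: "finite K" using KE fE finite_subset by blast
  have "m - card K \<le> card (E - K)" using card_Diff_subset[OF fK KE] cK cE m2 by simp
  then obtain T where T: "T \<subseteq> E - K" "card T = m - card K" "finite T"
    by (rule obtain_subset_with_card_n)
  define G where "G = K \<union> T"
  have cG: "card G = m" unfolding G_def using T fK cK m1 by (subst card_Un_disjoint) auto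
  have GE: "G \<subseteq> E" unfolding G_def using T KE by auto
  have rg: "rgraph r G" unfolding rgraph_def using GE fE finite_subset
    by (auto simp: E_def intro: finite_subset)
  define u where "u y = (if y \<in> {0..<n} then 1 / real n else 0)" for y
  have "u sums (\<Sum>y\<in>{0..<n}. 1 / real n)" unfolding u_def by (rule sums_If_finite_set) simp
  then have "u sums 1" using n0 by simp
  then have wu: "weighting u" unfolding weighting_def u_def by auto
  have "wval u K = (\<Sum>e\<in>K. (1 / real n) ^ r)" unfolding wval_def
  proof (rule sum.cong[OF refl])
    fix e assume "e \<in> K"
    then have "e \<subseteq> {0..<n}" "card e = r" unfolding K_def by auto
    then show "(\<Prod>y\<in>e. u y) = (1 / real n) ^ r" unfolding u_def
      by (subst prod.cong[of e e _ "\<lambda>_. 1 / real n"]) auto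
  qed
  also have "\<dots> = real (n choose r) / real n ^ r" using cK by (simp add: power_divide)
  finally have "real (n choose r) / real n ^ r = wval u K" by simp
  also have "\<dots> \<le> wval u G" unfolding wval_def G_def
    by (rule sum_mono2) (use T fK u_def n0 in \<open>auto intro!: prod_nonneg\<close>)
  also have "\<dots> \<le> lagr G" by (rule lagr_ge[OF wu rg])
  also have "\<dots> \<le> Lam m r" unfolding Lam_def
  proof (rule cSup_upper)
    show "lagr G \<in> {lagr G |G. rgraph r G \<and> card G = m}" using rg cG by auto
    show "bdd_above {lagr G |G. rgraph r G \<and> card G = m}"
      by (rule bdd_aboveI[of _ "real m"]) (use lagr_le(1) in auto)
  qed
  finally show ?thesis .
qed

lemma inj_rm: "inj_on (\<lambda>e. e - {x}) {e\<in>G. x\<in>e}"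
  by (rule inj_onI) (metis (no_types, lifting) insert_Diff mem_Collect_eq)

lemma dg_upper:
  assumes w: "weighting w" and G: "rgraph r G" and r1: "1 \<le> r" and xV: "x \<in> vset G"
  shows "fact (r - 1) * dg w G x \<le> (1 - w x) ^ (r - 1)"
proof -
  have fG: "finite G" "\<And>e. e \<in> G \<Longrightarrow> finite e \<and> card e = r" using G unfolding rgraph_def by auto
  have fV: "finite (vset G)" unfolding vset_def using fG by auto
  define F where "F = (\<lambda>e. e - {x}) ` {e\<in>G. x\<in>e}"
  have "dg w G x = (\<Sum>f\<in>F. \<Prod>y\<in>f. w y)" unfolding dg_def F_def
    by (simp add: sum.reindex[OF inj_rm])
  moreover have "fact (r - 1) * (\<Sum>f\<in>F. \<Prod>y\<in>f. w y) \<le> (\<Sum>y\<in>vset G - {x}. w y) ^ (r - 1)"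
  proof (rule esym_bound)
    show "finite (vset G - {x})" using fV by simp
    show "\<forall>y\<in>vset G - {x}. 0 \<le> w y" using w_nonneg[OF w] by auto
    show "finite F" unfolding F_def using fG by simp
    show "\<forall>f\<in>F. f \<subseteq> vset G - {x} \<and> card f = r - 1"
      unfolding F_def vset_def using fG by auto
  qed
  moreover have "(\<Sum>y\<in>vset G - {x}. w y) \<le> 1 - w x"
    using sum_diff1[of "vset G" w x] xV fV wsum_le1[OF w fV] by simp
  moreover have "0 \<le> (\<Sum>y\<in>vset G - {x}. w y)" using w_nonneg[OF w] by (simp add: sum_nonneg)
  ultimately show ?thesis
    by (metis (no_types, lifting) order_trans power_mono)
qed

lemma card_nbhd: "card (nbhd G x) = card {e\<in>G. x\<in>e}"
proof -
  have "nbhd G x = (\<lambda>e. e - {x}) ` {e\<in>G. x\<in>e}" unfolding nbhd_def by auto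
  then show ?thesis using card_image[OF inj_rm] by simp
qed

lemma deg_sum: assumes G: "rgraph r G"
  shows "(\<Sum>x\<in>vset G. real (card {e\<in>G. x\<in>e})) = real r * card G"
proof -
  have fG: "finite G" "\<And>e. e \<in> G \<Longrightarrow> finite e \<and> card e = r" using G unfolding rgraph_def by auto
  have fV: "finite (vset G)" unfolding vset_def using fG by auto
  have "(\<Sum>e\<in>G. \<Sum>y\<in>e. (1::real)) = (\<Sum>y\<in>vset G. \<Sum>e\<in>{e\<in>G. y\<in>e}. (1::real))"
    by (rule sum_edges_swap) (use fG fV in \<open>auto simp: vset_def\<close>)
  moreover have "(\<Sum>e\<in>G. \<Sum>y\<in>e. (1::real)) = (\<Sum>e\<in>G. real r)" using fG by simp
  ultimately show ?thesis by simp
qed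

theorem proposition4p4:
  fixes r :: nat
  assumes "r \<ge> 3"
  shows "\<exists>(\<rho>::real) (\<kappa>::real) (C::real) (c::real) (t0::nat).
    \<rho> > 0 \<and> \<kappa> > 0 \<and> C > 0 \<and> c > 0 \<and>
    (\<forall>t m G w. t \<ge> t0 \<and> (t - 1) choose r \<le> m \<and> m \<le> t choose r \<and>
       rgraph r G \<and> card G \<le> m \<and> weighting w \<and>
       wval w G = lagr G \<and> lagr G = Lam m r \<and>
       (\<forall>x\<in>vset G. w x > 0) \<longrightarrow>
         (\<forall>x\<in>vset G. w x \<le> C / real t) \<and>
         (\<forall>x\<in>vset G. real (card (nbhd G x)) \<ge> \<rho> * real t ^ (r - 1)) \<and>
         real (card (vset G)) \<le> \<kappa> * real t \<and>
         real (card {x\<in>vset G. w x \<ge> c / real t}) \<ge> c * real t)"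
proof -
  define Cc :: real where "Cc = 2 * (real r)^2"
  define \<rho> :: real where "\<rho> = 1 / (2 * fact (r - 1) * Cc ^ (r - 1))"
  define \<kappa> :: real where "\<kappa> = real r / (fact r * \<rho>)"
  define c :: real where "c = 1 / (2 * (1 + real r * Cc))"
  define t0 :: nat where "t0 = 2 * r^2 + 2"
  have r1: "1 \<le> r" using assms by simp
  have Cc0: "0 < Cc" unfolding Cc_def using r1 by simp
  have rho0: "0 < \<rho>" unfolding \<rho>_def using Cc0 by simp
  have kap0: "0 < \<kappa>" unfolding \<kappa>_def using rho0 r1 by simp
  have rC0: "0 \<le> real r * Cc" using Cc0 by simp
  have c0: "0 < c" unfolding c_def using rC0 by simp
  have c1: "c \<le> 1" unfolding c_def using rC0 by simp
  have factr: "fact r = real r * fact (r - 1)" using r1 fact_reduce[of r] by simp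
  show ?thesis
  proof (intro exI conjI allI impI)
    show "0 < \<rho>" "0 < \<kappa>" "0 < Cc" "0 < c" by (fact rho0 kap0 Cc0 c0)+
    fix t m G w
    assume H: "t0 \<le> t \<and> t - 1 choose r \<le> m \<and> m \<le> t choose r \<and>
       rgraph r G \<and> card G \<le> m \<and> weighting w \<and>
       wval w G = lagr G \<and> lagr G = Lam m r \<and> (\<forall>x\<in>vset G. 0 < w x)"
    then have tt: "t0 \<le> t" and m1: "t - 1 choose r \<le> m" and m2: "m \<le> t choose r"
      and G: "rgraph r G" and cG: "card G \<le> m" and w: "weighting w"
      and opt: "wval w G = lagr G" and lam: "lagr G = Lam m r" and pos: "\<forall>x\<in>vset G. 0 < w x"
      by auto
    define n where "n = t - 1"
    define L where "L = lagr G"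
    have tn: "t = Suc n" unfolding n_def using tt t0_def by simp
    have nb: "2 * r^2 \<le> n" using tt unfolding t0_def n_def by simp
    have n_big: "2 * (real r)^2 \<le> real n"
    proof -
      have "real (2 * r^2) \<le> real n" using nb by (simp only: of_nat_le_iff)
      then show ?thesis by simp
    qed
    have rr: "r \<le> r^2" using r1 by (simp add: power2_eq_square)
    have rn: "r \<le> n" using rr nb by simp
    have n0: "0 < n" using rn r1 by simp
    have t0': "0 < real t" using tn by simp
    have LL: "real (n choose r) / real n ^ r \<le> L"
    proof -
      have m1': "n choose r \<le> m" using m1 unfolding n_def .
      have m2': "m \<le> Suc n choose r" using m2 unfolding tn .
      show ?thesis unfolding L_def lam by (rule lam_lower[OF n0 m1' m2'])
    qed
    have RB: "real n ^ r * (1 - (real r)^2 / n) \<le> fact r * real (n choose r)"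
      by (rule ratio_bound[OF n0 rn])
    have FL: "1 - (real r)^2 / n \<le> fact r * L"
    proof -
      have "1 - (real r)^2 / n \<le> fact r * (real (n choose r) / real n ^ r)"
        using RB n0 by (simp add: field_simps)
      also have "\<dots> \<le> fact r * L" using LL by (intro mult_left_mono) auto
      finally show ?thesis .
    qed
    have half: "1 / 2 \<le> fact r * L"
    proof -
      have "(real r)^2 / n \<le> 1 / 2" using n_big n0 by (simp add: field_simps)
      then show ?thesis using FL by linarith
    qed
    have FL2: "1 - Cc / t \<le> fact r * L"
    proof -
      have "real t \<le> 2 * real n" using tn n0 by simp
      have "(real r)^2 / n = Cc / (2 * real n)" unfolding Cc_def by simp
      also have "\<dots> \<le> Cc / t" by (rule divide_left_mono) (use Cc0 t0' \<open>real t \<le> 2 * real n\<close> in auto)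
      finally have "(real r)^2 / n \<le> Cc / t" .
      then show ?thesis using FL by linarith
    qed
    have fG: "finite G" "\<And>e. e \<in> G \<Longrightarrow> finite e \<and> card e = r" using G unfolding rgraph_def by auto
    have fV: "finite (vset G)" unfolding vset_def using fG by auto
    have kk: "fact r * L \<le> fact (r - 1) * dg w G x" if "x \<in> vset G" for x
    proof -
      have "real r * L \<le> dg w G x" unfolding L_def by (rule kkt[OF w G opt]) (use pos that in auto)
      then have "fact (r - 1) * (real r * L) \<le> fact (r - 1) * dg w G x"
        by (rule mult_left_mono) simp
      then show ?thesis unfolding factr by (simp add: algebra_simps)
    qed
    have part1: "w x \<le> Cc / real t" if xV: "x \<in> vset G" for x
    proof -
      have a0: "0 \<le> w x" "w x \<le> 1" using w_nonneg[OF w] w_le1[OF w] by auto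
      have "(1 - w x) ^ (r - 1) \<le> (1 - w x) ^ 1"
        by (rule power_decreasing) (use a0 r1 assms in auto)
      then have "1 - Cc / t \<le> 1 - w x"
        using FL2 kk[OF xV] dg_upper[OF w G r1 xV] by simp
      then show ?thesis by simp
    qed
    have part2: "\<rho> * real t ^ (r - 1) \<le> real (card (nbhd G x))" if xV: "x \<in> vset G" for x
    proof -
      have "dg w G x \<le> (\<Sum>e\<in>{e\<in>G. x\<in>e}. (Cc / t) ^ (r - 1))" unfolding dg_def
      proof (rule sum_mono)
        fix e assume e: "e \<in> {e\<in>G. x\<in>e}"
        then have "card (e - {x}) = r - 1" using fG by auto
        moreover have "(\<Prod>y\<in>e-{x}. w y) \<le> (\<Prod>y\<in>e-{x}. Cc / t)"
          by (rule prod_mono) (use e part1 w_nonneg[OF w] in \<open>auto simp: vset_def\<close>)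
        ultimately show "(\<Prod>y\<in>e-{x}. w y) \<le> (Cc / t) ^ (r - 1)" by simp
      qed
      also have "\<dots> = real (card (nbhd G x)) * (Cc / t) ^ (r - 1)" by (simp add: card_nbhd)
      finally have d: "dg w G x \<le> real (card (nbhd G x)) * (Cc / t) ^ (r - 1)" .
      have "1 / 2 \<le> fact (r - 1) * (real (card (nbhd G x)) * (Cc / t) ^ (r - 1))"
      proof -
        have "fact (r - 1) * dg w G x \<le> fact (r - 1) * (real (card (nbhd G x)) * (Cc / t) ^ (r - 1))"
          using d by (rule mult_left_mono) simp
        then show ?thesis using half kk[OF xV] by linarith
      qed
      then have "real t ^ (r - 1) \<le> 2 * fact (r - 1) * Cc ^ (r - 1) * real (card (nbhd G x))"
        using t0' by (simp add: power_divide field_simps)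
      then show ?thesis unfolding \<rho>_def using Cc0 by (simp add: field_simps)
    qed
    have binb: "real m * fact r \<le> real t ^ r"
    proof -
      have "(t choose r) * fact r \<le> t ^ r" by (rule binomial_fact_pow)
      then have "real ((t choose r) * fact r) \<le> real (t ^ r)" by (simp only: of_nat_le_iff)
      then have "real (t choose r) * fact r \<le> real t ^ r" by simp
      moreover have "real m \<le> real (t choose r)" using m2 by simp
      then have "real m * fact r \<le> real (t choose r) * fact r" by (rule mult_right_mono) simp
      ultimately show ?thesis by linarith
    qed
    have part3: "real (card (vset G)) \<le> \<kappa> * real t"
    proof -
      have "real (card (vset G)) * (\<rho> * real t ^ (r - 1)) = (\<Sum>x\<in>vset G. \<rho> * real t ^ (r - 1))" by simp
      also have "\<dots> \<le> (\<Sum>x\<in>vset G. real (card {e\<in>G. x\<in>e}))"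
        by (rule sum_mono) (use part2 card_nbhd in simp)
      also have "\<dots> = real r * card G" by (rule deg_sum[OF G])
      also have "\<dots> \<le> real r * real m" using cG by (intro mult_left_mono) auto
      finally have A: "real (card (vset G)) * (\<rho> * real t ^ (r - 1)) \<le> real r * real m" .
      have "real (card (vset G)) * (\<rho> * fact r * real t ^ (r - 1)) \<le> real r * (real m * fact r)"
        using mult_right_mono[OF A, of "fact r"] by (simp add: algebra_simps)
      also have "\<dots> \<le> real r * real t ^ r" using binb by (intro mult_left_mono) auto
      also have "\<dots> = (real r * real t) * real t ^ (r - 1)" using r1
        by (cases r) auto
      finally have "real (card (vset G)) * (\<rho> * fact r) \<le> real r * real t"
        using t0' by (simp add: mult.assoc[symmetric])
      then show ?thesis unfolding \<kappa>_def using rho0 by (simp add: field_simps)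
    qed
    have part4: "c * real t \<le> real (card {x\<in>vset G. c / real t \<le> w x})"
    proof (rule ccontr)
      define Hs where "Hs = {x\<in>vset G. c / real t \<le> w x}"
      assume "\<not> c * real t \<le> real (card {x\<in>vset G. c / real t \<le> w x})"
      then have few: "real (card Hs) < c * real t" unfolding Hs_def by simp
      have fH: "finite Hs" unfolding Hs_def using fV by simp
      have HV: "Hs \<subseteq> vset G" unfolding Hs_def by auto
      have edge: "(\<Prod>y\<in>e. w y) \<le> (c / t) ^ r + (\<Sum>y\<in>e. if y \<in> Hs then (\<Prod>z\<in>e. w z) else 0)"
        if e: "e \<in> G" for e
      proof (cases "e \<inter> Hs = {}")
        case True
        have "(\<Prod>y\<in>e. w y) \<le> (\<Prod>y\<in>e. c / t)"
        proof (rule prod_mono)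
          fix y assume ye: "y \<in> e"
          have "y \<in> vset G" using e ye unfolding vset_def by blast
          moreover have "y \<notin> Hs" using True ye by blast
          ultimately have "w y < c / t" unfolding Hs_def by simp
          then show "0 \<le> w y \<and> w y \<le> c / t" using w_nonneg[OF w, of y] by simp
        qed
        also have "\<dots> = (c / t) ^ r" using fG e by simp
        moreover have "(\<Sum>y\<in>e. if y \<in> Hs then (\<Prod>z\<in>e. w z) else 0) = 0"
          using True by (intro sum.neutral ballI) auto
        ultimately show ?thesis by linarith
      next
        case False
        then obtain y where y: "y \<in> e" "y \<in> Hs" by auto
        have P0: "0 \<le> (\<Prod>z\<in>e. w z)" using w_nonneg[OF w] by (simp add: prod_nonneg)
        have "(\<Prod>z\<in>e. w z) = (if y \<in> Hs then (\<Prod>z\<in>e. w z) else 0)" using y by simp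
        also have "\<dots> \<le> (\<Sum>y\<in>e. if y \<in> Hs then (\<Prod>z\<in>e. w z) else 0)"
        proof (rule member_le_sum)
          show "y \<in> e" by (rule y(1))
          show "finite e" using fG e by blast
          show "\<And>x. x \<in> e - {y} \<Longrightarrow> 0 \<le> (if x \<in> Hs then (\<Prod>z\<in>e. w z) else 0)"
            using P0 by simp
        qed
        moreover have "0 \<le> (c / t) ^ r" using c0 t0' by simp
        ultimately show ?thesis by linarith
      qed
      have "(\<Sum>e\<in>G. \<Sum>y\<in>e. if y \<in> Hs then (\<Prod>z\<in>e. w z) else 0)
          = (\<Sum>y\<in>vset G. \<Sum>e\<in>{e\<in>G. y\<in>e}. if y \<in> Hs then (\<Prod>z\<in>e. w z) else 0)"
        by (rule sum_edges_swap) (use fG fV in \<open>auto simp: vset_def\<close>)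
      also have "\<dots> = (\<Sum>y\<in>vset G. if y \<in> Hs then w y * dg w G y else 0)"
      proof (rule sum.cong[OF refl])
        fix y assume "y \<in> vset G"
        have "(\<Sum>e\<in>{e\<in>G. y\<in>e}. (\<Prod>z\<in>e. w z)) = (\<Sum>e\<in>{e\<in>G. y\<in>e}. w y * (\<Prod>z\<in>e-{y}. w z))"
          by (rule sum.cong) (use fG in \<open>auto simp: prod.remove\<close>)
        then show "(\<Sum>e\<in>{e\<in>G. y\<in>e}. if y \<in> Hs then (\<Prod>z\<in>e. w z) else 0) = (if y \<in> Hs then w y * dg w G y else 0)"
          unfolding dg_def by (simp add: sum_distrib_left)
      qed
      also have "\<dots> = (\<Sum>y\<in>Hs. w y * dg w G y)"
      proof -
        have hs: "{y\<in>vset G. y\<in>Hs} = Hs" using HV by blast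
        have "(\<Sum>y\<in>vset G. if y \<in> Hs then w y * dg w G y else 0) = (\<Sum>y\<in>{y\<in>vset G. y\<in>Hs}. w y * dg w G y)"
          by (rule sum.inter_filter[OF fV, symmetric])
        then show ?thesis unfolding hs .
      qed
      also have "\<dots> \<le> (\<Sum>y\<in>Hs. (Cc / t) * (1 / fact (r - 1)))"
      proof (rule sum_mono)
        fix y assume yH: "y \<in> Hs"
        then have yV: "y \<in> vset G" using HV by auto
        have "fact (r - 1) * dg w G y \<le> (1 - w y) ^ (r - 1)" by (rule dg_upper[OF w G r1 yV])
        also have "\<dots> \<le> 1" using w_nonneg[OF w, of y] w_le1[OF w, of y] by (simp add: power_le_one)
        finally have "dg w G y \<le> 1 / fact (r - 1)" by (simp add: field_simps)
        then show "w y * dg w G y \<le> (Cc / t) * (1 / fact (r - 1))"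
          using part1[OF yV] w_nonneg[OF w, of y] dg_nonneg[OF w, of G y]
          by (intro mult_mono) auto
      qed
      also have "\<dots> = real (card Hs) * Cc / (t * fact (r - 1))" by simp
      finally have Sb: "(\<Sum>e\<in>G. \<Sum>y\<in>e. if y \<in> Hs then (\<Prod>z\<in>e. w z) else 0) \<le> real (card Hs) * Cc / (t * fact (r - 1))" .
      have "L = (\<Sum>e\<in>G. \<Prod>y\<in>e. w y)" using opt unfolding L_def wval_def by simp
      also have "\<dots> \<le> (\<Sum>e\<in>G. (c / t) ^ r + (\<Sum>y\<in>e. if y \<in> Hs then (\<Prod>z\<in>e. w z) else 0))"
        by (rule sum_mono) (use edge in auto)
      also have "\<dots> = card G * (c / t) ^ r + (\<Sum>e\<in>G. \<Sum>y\<in>e. if y \<in> Hs then (\<Prod>z\<in>e. w z) else 0)"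
        by (simp add: sum.distrib)
      finally have Lb: "L \<le> card G * (c / t) ^ r + real (card Hs) * Cc / (t * fact (r - 1))"
        using Sb by linarith
      have "fact r * L \<le> fact r * (card G * (c / t) ^ r) + fact r * (real (card Hs) * Cc / (t * fact (r - 1)))"
        using mult_left_mono[OF Lb, of "fact r"] by (simp add: algebra_simps)
      also have "fact r * (card G * (c / t) ^ r) \<le> c ^ r"
      proof -
        have "real (card G) * fact r \<le> real m * fact r" using cG by (intro mult_right_mono) auto
        then have "real (card G) * fact r \<le> real t ^ r" using binb by linarith
        then have "real (card G) * fact r * (c / t) ^ r \<le> real t ^ r * (c / t) ^ r"
          using c0 t0' by (intro mult_right_mono) auto
        also have "\<dots> = c ^ r" using t0' by (simp add: power_divide)
        finally show ?thesis by (simp add: algebra_simps)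
      qed
      also have "c ^ r \<le> c" using power_decreasing[of 1 r c] c0 c1 r1 by simp
      also have "fact r * (real (card Hs) * Cc / (t * fact (r - 1))) = real r * Cc * (real (card Hs) / t)"
        unfolding factr using fact_gt_zero[of "r - 1"] t0' by (simp add: field_simps)
      also have "\<dots> < real r * Cc * c"
      proof (rule mult_strict_left_mono)
        show "real (card Hs) / t < c" using few t0' by (simp add: pos_divide_less_eq)
        show "0 < real r * Cc" using Cc0 r1 by simp
      qed
      finally have "fact r * L < c + real r * Cc * c" by simp
      also have "\<dots> = 1 / 2" unfolding c_def using rC0 by (simp add: field_simps)
      finally show False using half by simp
    qed
    show "\<forall>x\<in>vset G. w x \<le> Cc / real t" using part1 by auto
    show "\<forall>x\<in>vset G. \<rho> * real t ^ (r - 1) \<le> real (card (nbhd G x))" using part2 by auto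
    show "real (card (vset G)) \<le> \<kappa> * real t" by (rule part3)
    show "c * real t \<le> real (card {x\<in>vset G. c / real t \<le> w x})" by (rule part4)
  qed
qed

end
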